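(* In the finite-sum setting, assume $f$ is convex and $L$-smooth with minimizer $x^\ast$, and that $\tilde\nabla_1$ satisfies the strong growth condition with constant $\rho_1\ge1$. Let $K\in\{1,\dots,N\}$, $\bar\rho_K:=\frac{\rho_1(N-K)+(K-1)N}{K(N-1)}$, and run SNAG with batch size $K$ and parameters $s=\frac{1}{L\bar\rho_K}$, $\eta_n=\frac{1}{L\bar\rho_K^2}\frac{n+1}2$, $\beta=1$, $\alpha_n=\frac{n^2/(n+1)}{2+n^2/(n+1)}$. Then, with $\Delta_K:=\frac{N-K}{N-1}+\frac N{\rho_1}\frac{K-1}{N-1}$, we have $\mathbb{E}[f(x_n)-f^\ast]\le\varepsilon$ as soon as the number of component-gradient evaluations $nK$ satisfies $$nK\ge\Delta_K\,\rho_1\sqrt{\frac{2L}{\varepsilon}}\|x_0-x^\ast\|.$$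
   Context: Finite-sum setting: $N\ge2$, $f_i:\mathbb{R}^d\to\mathbb{R}$ continuously differentiable, $f=\frac1N\sum_if_i$, $f^\ast=\min f$. For $K\in\{1,\dots,N\}$, $B$ is a uniformly random subset of $\{1,\dots,N\}$ of size $K$ and $\tilde\nabla_K(x)=\frac1K\sum_{i\in B}\nabla f_i(x)$; each iteration with batch size $K$ evaluates $K$ gradients $\nabla f_i$. Strong growth condition with constant $\rho_K\ge 1$: $\mathbb{E}\|\tilde\nabla_K(x)\|^2\le\rho_K\|\nabla f(x)\|^2$ for all $x$. SNAG: $x_0=z_0$; $y_n=\alpha_nx_n+(1-\alpha_n)z_n$, $x_{n+1}=y_n-s\tilde\nabla_K(y_n)$, $z_{n+1}=\beta z_n+(1-\beta)y_n-\eta_n\tilde\nabla_K(y_n)$, same batch in both updates of an iteration, independent batches across iterations. *)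

theory Defs
  imports "HOL-Analysis.Analysis" "HOL-Library.FuncSet"
begin

text \<open>Components are indexed by 0..N-1. g i is the gradient of the component f i.\<close>

definition full_obj :: "nat \<Rightarrow> (nat \<Rightarrow> 'a \<Rightarrow> real) \<Rightarrow> 'a \<Rightarrow> real" where
  "full_obj N f x = (1 / real N) * (\<Sum>i<N. f i x)"

definition full_grad :: "nat \<Rightarrow> (nat \<Rightarrow> 'a \<Rightarrow> 'a::real_vector) \<Rightarrow> 'a \<Rightarrow> 'a" where
  "full_grad N g x = (1 / real N) *\<^sub>R (\<Sum>i<N. g i x)"

text \<open>All subsets of {0..N-1} of size K (the support of the uniform batch distribution).\<close>
definition batches :: "nat \<Rightarrow> nat \<Rightarrow> nat set set" where
  "batches N K = {B. B \<subseteq> {..<N} \<and> card B = K}"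

definition batch_grad :: "nat \<Rightarrow> (nat \<Rightarrow> 'a \<Rightarrow> 'a::real_vector) \<Rightarrow> nat set \<Rightarrow> 'a \<Rightarrow> 'a" where
  "batch_grad K g B x = (1 / real K) *\<^sub>R (\<Sum>i\<in>B. g i x)"

definition strong_growth :: "nat \<Rightarrow> (nat \<Rightarrow> 'a \<Rightarrow> 'a::real_inner) \<Rightarrow> nat \<Rightarrow> real \<Rightarrow> bool" where
  "strong_growth N g K \<rho> \<longleftrightarrow>
     (\<forall>x. (\<Sum>B\<in>batches N K. (norm (batch_grad K g B x))\<^sup>2) / real (card (batches N K))
            \<le> \<rho> * (norm (full_grad N g x))\<^sup>2)"

fun snag :: "nat \<Rightarrow> (nat \<Rightarrow> 'a \<Rightarrow> 'a::real_vector) \<Rightarrow> (nat \<Rightarrow> real) \<Rightarrow> real \<Rightarrow> real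
              \<Rightarrow> (nat \<Rightarrow> real) \<Rightarrow> 'a \<Rightarrow> (nat \<Rightarrow> nat set) \<Rightarrow> nat \<Rightarrow> 'a \<times> 'a" where
  "snag K g \<alpha> \<beta> s \<eta> x0 Bs 0 = (x0, x0)"
| "snag K g \<alpha> \<beta> s \<eta> x0 Bs (Suc n) =
     (let (x, z) = snag K g \<alpha> \<beta> s \<eta> x0 Bs n;
          y = \<alpha> n *\<^sub>R x + (1 - \<alpha> n) *\<^sub>R z;
          gr = batch_grad K g (Bs n) y
      in (y - s *\<^sub>R gr, \<beta> *\<^sub>R z + (1 - \<beta>) *\<^sub>R y - \<eta> n *\<^sub>R gr))"

text \<open>Expectation of F(x_n) over n independent uniform batches of size K:
  average over all batch sequences (B_0,...,B_{n-1}).\<close>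
definition snag_expect :: "nat \<Rightarrow> nat \<Rightarrow> (nat \<Rightarrow> 'a \<Rightarrow> 'a::real_vector) \<Rightarrow> ('a \<Rightarrow> real)
     \<Rightarrow> (nat \<Rightarrow> real) \<Rightarrow> real \<Rightarrow> real \<Rightarrow> (nat \<Rightarrow> real) \<Rightarrow> 'a \<Rightarrow> nat \<Rightarrow> real" where
  "snag_expect N K g F \<alpha> \<beta> s \<eta> x0 n =
     (\<Sum>Bs\<in>PiE {..<n} (\<lambda>_. batches N K). F (fst (snag K g \<alpha> \<beta> s \<eta> x0 Bs n)))
       / real (card (PiE {..<n} (\<lambda>_. batches N K)))"

end

theory Submission
  imports Defs
begin



lemma full_obj_deriv:
  assumes grad: "\<forall>i<N. \<forall>x. (f i has_derivative (\<lambda>h. inner (g i x) h)) (at x)"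
  shows "(full_obj N f has_derivative (\<lambda>h. inner (full_grad N g x) h)) (at x)"
proof -
  have "((\<lambda>x. \<Sum>i<N. f i x) has_derivative (\<lambda>h. \<Sum>i<N. inner (g i x) h)) (at x)"
    using grad by (intro has_derivative_sum) auto
  then have "((\<lambda>x. (1 / real N) * (\<Sum>i<N. f i x)) has_derivative (\<lambda>h. (1 / real N) * (\<Sum>i<N. inner (g i x) h))) (at x)"
    by (rule has_derivative_mult_right)
  then show ?thesis
    unfolding full_obj_def full_grad_def
    by (rule has_derivative_eq_rhs) (auto simp: inner_sum_left)
qed

lemma line_deriv:
  fixes F :: "'a::real_inner \<Rightarrow> real"
  assumes "\<forall>x. (F has_derivative (\<lambda>h. inner (G x) h)) (at x)"
  shows "((\<lambda>t. F (x + t *\<^sub>R d)) has_real_derivative inner (G (x + t *\<^sub>R d)) d) (at t)"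
proof -
  have 1: "((\<lambda>t. x + t *\<^sub>R d) has_derivative (\<lambda>h. h *\<^sub>R d)) (at t)"
    by (auto intro!: derivative_eq_intros)
  have "((\<lambda>t. F (x + t *\<^sub>R d)) has_derivative (\<lambda>h. inner (G (x + t *\<^sub>R d)) (h *\<^sub>R d))) (at t)"
    using has_derivative_compose[OF 1] assms by blast
  then show ?thesis unfolding has_field_derivative_def
    by (rule has_derivative_eq_rhs) (auto simp: fun_eq_iff)
qed

lemma descent:
  fixes F :: "'a::real_inner \<Rightarrow> real"
  assumes der: "\<forall>x. (F has_derivative (\<lambda>h. inner (G x) h)) (at x)"
    and lip: "\<forall>x y. norm (G x - G y) \<le> L * norm (x - y)"
  shows "F y \<le> F x + inner (G x) (y - x) + L / 2 * (norm (y - x))\<^sup>2"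
proof -
  define d where "d = y - x"
  define \<psi> where "\<psi> t = F (x + t *\<^sub>R d) - t * inner (G x) d - L / 2 * t\<^sup>2 * (norm d)\<^sup>2" for t
  have D: "(\<psi> has_real_derivative (inner (G (x + t *\<^sub>R d)) d - inner (G x) d - L * t * (norm d)\<^sup>2)) (at t)" for t
    unfolding \<psi>_def
    by (rule line_deriv[OF der, THEN DERIV_diff, THEN DERIV_diff, THEN DERIV_cong])
       (auto intro!: derivative_eq_intros simp: power2_eq_square)
  obtain z where z: "0 < z" "z < 1" "\<psi> 1 - \<psi> 0 = (1 - 0) * (inner (G (x + z *\<^sub>R d)) d - inner (G x) d - L * z * (norm d)\<^sup>2)"
    using MVT2[of 0 1 \<psi>, OF _ D] by auto
  have "inner (G (x + z *\<^sub>R d)) d - inner (G x) d = inner (G (x + z *\<^sub>R d) - G x) d"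
    by (simp add: inner_diff_left)
  also have "\<dots> \<le> norm (G (x + z *\<^sub>R d) - G x) * norm d"
    by (rule norm_cauchy_schwarz)
  also have "\<dots> \<le> L * norm (z *\<^sub>R d) * norm d"
    using lip[rule_format, of "x + z *\<^sub>R d" x] by (intro mult_right_mono) auto
  also have "\<dots> = L * z * (norm d)\<^sup>2" using z by (simp add: power2_eq_square)
  finally have "\<psi> 1 \<le> \<psi> 0" using z by simp
  then show ?thesis unfolding \<psi>_def d_def by simp
qed

lemma convex_tangent:
  fixes F :: "'a::real_inner \<Rightarrow> real"
  assumes der: "\<forall>x. (F has_derivative (\<lambda>h. inner (G x) h)) (at x)"
    and cvx: "convex_on UNIV F"
  shows "F w \<ge> F y + inner (G y) (w - y)"
proof -
  define d where "d = w - y"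
  define h where "h t = F (y + t *\<^sub>R d)" for t
  have hc: "convex_on UNIV h"
  proof (rule convex_onI)
    fix t a b :: real assume "0 < t" "t < 1"
    have "y + ((1 - t) * a + t * b) *\<^sub>R d = (1 - t) *\<^sub>R (y + a *\<^sub>R d) + t *\<^sub>R (y + b *\<^sub>R d)"
      by (simp add: algebra_simps)
    then show "h ((1 - t) *\<^sub>R a + t *\<^sub>R b) \<le> (1 - t) * h a + t * h b"
      unfolding h_def using convex_onD[OF cvx, of t "y + a *\<^sub>R d" "y + b *\<^sub>R d"] \<open>0 < t\<close> \<open>t < 1\<close>
      by simp
  qed simp
  have "(h has_real_derivative inner (G (y + 0 *\<^sub>R d)) d) (at 0)"
    unfolding h_def by (rule line_deriv[OF der])
  then have "h 1 - h 0 \<ge> inner (G y) d * (1 - 0)"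
    by (intro convex_on_imp_above_tangent[OF hc]) auto
  then show ?thesis unfolding h_def d_def by simp
qed




lemma batches_finite: "finite (batches N K)"
  unfolding batches_def by (rule finite_subset[of _ "Pow {..<N}"]) auto

lemma batches_card: "card (batches N K) = N choose K"
  unfolding batches_def using n_subsets[of "{..<N}" K] by simp

lemma cnt1:
  assumes "i < N" "1 \<le> K"
  shows "card {B\<in>batches N K. i \<in> B} = (N - 1) choose (K - 1)"
proof -
  have "bij_betw (\<lambda>C. insert i C) {C. C \<subseteq> {..<N} - {i} \<and> card C = K - 1} {B\<in>batches N K. i \<in> B}"
  proof (rule bij_betw_byWitness[where f' = "\<lambda>B. B - {i}"])
    show "\<forall>a\<in>{C. C \<subseteq> {..<N} - {i} \<and> card C = K - 1}. insert i a - {i} = a" by auto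
    show "\<forall>a'\<in>{B \<in> batches N K. i \<in> B}. insert i (a' - {i}) = a'" by auto
    show "insert i ` {C. C \<subseteq> {..<N} - {i} \<and> card C = K - 1} \<subseteq> {B \<in> batches N K. i \<in> B}"
    proof safe
      fix C assume C: "C \<subseteq> {..<N} - {i}" "card C = K - 1"
      then have "finite C" using finite_subset by blast
      moreover have "i \<notin> C" using C by auto
      ultimately have "card (insert i C) = K" using C assms by simp
      then show "insert i C \<in> batches N K" using C assms
        unfolding batches_def by auto
    qed
    show "(\<lambda>B. B - {i}) ` {B \<in> batches N K. i \<in> B} \<subseteq> {C. C \<subseteq> {..<N} - {i} \<and> card C = K - 1}"
    proof safe
      fix B assume "B \<in> batches N K" "i \<in> B"
      then have "finite B" "card B = K" "B \<subseteq> {..<N}" unfolding batches_def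
        using finite_subset by auto
      then show "card (B - {i}) = K - 1" using \<open>i \<in> B\<close> by simp
    qed (auto simp: batches_def)
  qed
  then have "card {B\<in>batches N K. i \<in> B} = card {C. C \<subseteq> {..<N} - {i} \<and> card C = K - 1}"
    by (simp add: bij_betw_same_card)
  also have "\<dots> = card ({..<N} - {i}) choose (K - 1)" by (rule n_subsets) simp
  also have "card ({..<N} - {i}) = N - 1" using assms by simp
  finally show ?thesis .
qed

lemma cnt2:
  assumes "i < N" "j < N" "i \<noteq> j" "2 \<le> K"
  shows "card {B\<in>batches N K. i \<in> B \<and> j \<in> B} = (N - 2) choose (K - 2)"
proof -
  have "bij_betw (\<lambda>C. C \<union> {i, j}) {C. C \<subseteq> {..<N} - {i, j} \<and> card C = K - 2} {B\<in>batches N K. i \<in> B \<and> j \<in> B}"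
  proof (rule bij_betw_byWitness[where f' = "\<lambda>B. B - {i, j}"])
    show "\<forall>a\<in>{C. C \<subseteq> {..<N} - {i, j} \<and> card C = K - 2}. a \<union> {i, j} - {i, j} = a" by auto
    show "\<forall>a'\<in>{B \<in> batches N K. i \<in> B \<and> j \<in> B}. a' - {i, j} \<union> {i, j} = a'" by auto
    show "(\<lambda>C. C \<union> {i, j}) ` {C. C \<subseteq> {..<N} - {i, j} \<and> card C = K - 2} \<subseteq> {B \<in> batches N K. i \<in> B \<and> j \<in> B}"
    proof safe
      fix C assume C: "C \<subseteq> {..<N} - {i, j}" "card C = K - 2"
      then have "finite C" using finite_subset by blast
      then have "card (C \<union> {i, j}) = card C + 2" using C assms
        by (subst card_Un_disjoint) auto
      then show "C \<union> {i, j} \<in> batches N K" using C assms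
        unfolding batches_def by auto
    qed
    show "(\<lambda>B. B - {i, j}) ` {B \<in> batches N K. i \<in> B \<and> j \<in> B} \<subseteq> {C. C \<subseteq> {..<N} - {i, j} \<and> card C = K - 2}"
    proof safe
      fix B assume "B \<in> batches N K" "i \<in> B" "j \<in> B"
      then have "finite B" "card B = K" "B \<subseteq> {..<N}" unfolding batches_def
        using finite_subset by auto
      then show "card (B - {i, j}) = K - 2" using \<open>i \<in> B\<close> \<open>j \<in> B\<close> assms
        by (subst card_Diff_subset) auto
    qed (auto simp: batches_def)
  qed
  then have "card {B\<in>batches N K. i \<in> B \<and> j \<in> B} = card {C. C \<subseteq> {..<N} - {i, j} \<and> card C = K - 2}"
    by (simp add: bij_betw_same_card)
  also have "\<dots> = card ({..<N} - {i, j}) choose (K - 2)" by (rule n_subsets) simp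
  also have "card ({..<N} - {i, j}) = N - 2" using assms by (subst card_Diff_subset) auto
  finally show ?thesis .
qed

lemma cnt2_K1:
  assumes "i \<noteq> j" "K < 2"
  shows "card {B\<in>batches N K. i \<in> B \<and> j \<in> B} = 0"
proof -
  have E: "{B\<in>batches N K. i \<in> B \<and> j \<in> B} = {}"
  proof safe
    fix B assume "B \<in> batches N K" "i \<in> B" "j \<in> B"
    then have "finite B" "card B = K" unfolding batches_def
      using finite_subset by auto
    moreover have "card {i, j} \<le> card B" using \<open>finite B\<close> \<open>i \<in> B\<close> \<open>j \<in> B\<close>
      by (intro card_mono) auto
    ultimately show "B \<in> {}" using assms by simp
  qed
  show ?thesis by (simp only: E card.empty)
qed

definition c1 :: "nat \<Rightarrow> nat \<Rightarrow> real" where "c1 N K = real ((N - 1) choose (K - 1))"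
definition c2 :: "nat \<Rightarrow> nat \<Rightarrow> real" where "c2 N K = (if 2 \<le> K then real ((N - 2) choose (K - 2)) else 0)"

lemma cnt:
  assumes "i < N" "j < N" "1 \<le> K"
  shows "real (card {B\<in>batches N K. i \<in> B \<and> j \<in> B}) = (if i = j then c1 N K else c2 N K)"
  using cnt1[of i N K] cnt2[of i N j K] cnt2_K1[of i j K N] assms unfolding c1_def c2_def
  by auto

lemma pair_sum:
  fixes h :: "nat \<Rightarrow> nat \<Rightarrow> real"
  assumes "1 \<le> K"
  shows "(\<Sum>B\<in>batches N K. \<Sum>i\<in>B. \<Sum>j\<in>B. h i j)
     = c2 N K * (\<Sum>i<N. \<Sum>j<N. h i j) + (c1 N K - c2 N K) * (\<Sum>i<N. h i i)"
proof -
  have sub: "B \<subseteq> {..<N}" if "B \<in> batches N K" for B using that unfolding batches_def by auto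
  have "(\<Sum>B\<in>batches N K. \<Sum>i\<in>B. \<Sum>j\<in>B. h i j)
      = (\<Sum>B\<in>batches N K. \<Sum>i<N. \<Sum>j<N. (if i \<in> B \<and> j \<in> B then h i j else 0))"
  proof (rule sum.cong[OF refl])
    fix B assume "B \<in> batches N K"
    then have s: "B \<subseteq> {..<N}" by (rule sub)
    have "(\<Sum>i\<in>B. \<Sum>j\<in>B. h i j) = (\<Sum>i<N. if i \<in> B then (\<Sum>j<N. if j \<in> B then h i j else 0) else 0)"
      using s by (simp add: sum.If_cases Int_absorb1 Int_absorb2)
    also have "\<dots> = (\<Sum>i<N. \<Sum>j<N. (if i \<in> B \<and> j \<in> B then h i j else 0))"
      by (intro sum.cong) auto
    finally show "(\<Sum>i\<in>B. \<Sum>j\<in>B. h i j) = (\<Sum>i<N. \<Sum>j<N. (if i \<in> B \<and> j \<in> B then h i j else 0))" .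
  qed
  also have "\<dots> = (\<Sum>i<N. \<Sum>j<N. \<Sum>B\<in>batches N K. (if i \<in> B \<and> j \<in> B then h i j else 0))"
    by (simp add: sum.swap[of _ "batches N K"])
  also have "\<dots> = (\<Sum>i<N. \<Sum>j<N. (if i = j then c1 N K else c2 N K) * h i j)"
  proof (intro sum.cong refl)
    fix i j assume "i \<in> {..<N}" "j \<in> {..<N}"
    then show "(\<Sum>B\<in>batches N K. (if i \<in> B \<and> j \<in> B then h i j else 0)) = (if i = j then c1 N K else c2 N K) * h i j"
      using cnt[of i N j K] assms 
        sum.inter_filter[OF batches_finite[of N K], of "\<lambda>_. h i j" "\<lambda>B. i \<in> B \<and> j \<in> B", symmetric]
      by simp
  qed
  also have "\<dots> = (\<Sum>i<N. c2 N K * (\<Sum>j<N. h i j) + (c1 N K - c2 N K) * h i i)"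
  proof (rule sum.cong[OF refl])
    fix i assume i: "i \<in> {..<N}"
    have "(\<Sum>j<N. (if i = j then c1 N K else c2 N K) * h i j)
        = (\<Sum>j<N. c2 N K * h i j + (if i = j then (c1 N K - c2 N K) * h i j else 0))"
      by (intro sum.cong) (auto simp: algebra_simps)
    also have "\<dots> = c2 N K * (\<Sum>j<N. h i j) + (c1 N K - c2 N K) * h i i"
      using i by (simp add: sum.distrib sum_distrib_left)
    finally show "(\<Sum>j<N. (if i = j then c1 N K else c2 N K) * h i j) = c2 N K * (\<Sum>j<N. h i j) + (c1 N K - c2 N K) * h i i" .
  qed
  also have "\<dots> = c2 N K * (\<Sum>i<N. \<Sum>j<N. h i j) + (c1 N K - c2 N K) * (\<Sum>i<N. h i i)"
    by (simp add: sum.distrib sum_distrib_left)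
  finally show ?thesis .
qed




lemma single_sum:
  fixes v :: "nat \<Rightarrow> 'a::real_vector"
  assumes "1 \<le> K"
  shows "(\<Sum>B\<in>batches N K. \<Sum>i\<in>B. v i) = c1 N K *\<^sub>R (\<Sum>i<N. v i)"
proof -
  have "(\<Sum>B\<in>batches N K. \<Sum>i\<in>B. v i) = (\<Sum>B\<in>batches N K. \<Sum>i<N. (if i \<in> B then v i else 0))"
  proof (rule sum.cong[OF refl])
    fix B assume "B \<in> batches N K"
    then have s: "B \<subseteq> {..<N}" unfolding batches_def by auto
    show "(\<Sum>i\<in>B. v i) = (\<Sum>i<N. (if i \<in> B then v i else 0))"
      using s by (simp add: sum.If_cases Int_absorb1)
  qed
  also have "\<dots> = (\<Sum>i<N. \<Sum>B\<in>batches N K. (if i \<in> B then v i else 0))"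
    by (rule sum.swap)
  also have "\<dots> = (\<Sum>i<N. c1 N K *\<^sub>R v i)"
  proof (rule sum.cong[OF refl])
    fix i assume "i \<in> {..<N}"
    then show "(\<Sum>B\<in>batches N K. (if i \<in> B then v i else 0)) = c1 N K *\<^sub>R v i"
      using cnt[of i N i K] assms
        sum.inter_filter[OF batches_finite[of N K], of "\<lambda>_. v i" "\<lambda>B. i \<in> B", symmetric]
      by (simp add: sum_constant_scaleR)
  qed
  finally show ?thesis by (simp add: scaleR_sum_right)
qed

lemma c1_eq: assumes "1 \<le> K" "K \<le> N" shows "c1 N K = real K * real (N choose K) / real N"
proof -
  have "K * (N choose K) = N * ((N - 1) choose (K - 1))" using assms by (intro times_binomial_minus1_eq) auto
  then have "real K * real (N choose K) = real N * c1 N K" unfolding c1_def by (metis of_nat_mult)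
  then show ?thesis using assms by (simp add: field_simps)
qed

lemma c2_eq: assumes "1 \<le> K" "K \<le> N" "2 \<le> N"
  shows "c2 N K = real K * (real K - 1) * real (N choose K) / (real N * (real N - 1))"
proof (cases "2 \<le> K")
  case True
  have a: "K * (N choose K) = N * ((N - 1) choose (K - 1))" using assms by (intro times_binomial_minus1_eq) auto
  have b: "(K - 1) * ((N - 1) choose (K - 1)) = (N - 1) * ((N - 1 - 1) choose (K - 1 - 1))"
    using True by (intro times_binomial_minus1_eq) auto
  have "K * (K - 1) * (N choose K) = N * (N - 1) * ((N - 2) choose (K - 2))"
    using a b by (metis (no_types, lifting) diff_diff_left mult.assoc mult.left_commute one_add_one)
  then have "real (K * (K - 1) * (N choose K)) = real (N * (N - 1) * ((N - 2) choose (K - 2)))" by simp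
  then have "real K * (real K - 1) * real (N choose K) = real N * (real N - 1) * c2 N K"
    using True assms unfolding c2_def by (simp add: of_nat_diff)
  then show ?thesis using assms by (simp add: field_simps)
next
  case False
  then have "K = 1" using assms by auto
  then show ?thesis unfolding c2_def by simp
qed

lemma sum_bg:
  assumes "1 \<le> K" "K \<le> N"
  shows "(\<Sum>B\<in>batches N K. batch_grad K g B x) = real (card (batches N K)) *\<^sub>R full_grad N g x"
proof -
  have "(\<Sum>B\<in>batches N K. batch_grad K g B x) = (1 / real K) *\<^sub>R (c1 N K *\<^sub>R (\<Sum>i<N. g i x))"
    unfolding batch_grad_def by (simp add: scaleR_sum_right[symmetric] single_sum[OF assms(1)])
  also have "\<dots> = real (card (batches N K)) *\<^sub>R full_grad N g x"
    unfolding full_grad_def batches_card c1_eq[OF assms] using assms by simp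
  finally show ?thesis .
qed

lemma sgc1:
  assumes "strong_growth N g 1 \<rho>1"
  shows "(\<Sum>i<N. (norm (g i x))\<^sup>2) \<le> real N * \<rho>1 * (norm (full_grad N g x))\<^sup>2"
proof -
  have bat: "batches N 1 = (\<lambda>i. {i}) ` {..<N}"
    unfolding batches_def by (auto simp: card_1_singleton_iff)
  have "(\<Sum>B\<in>batches N 1. (norm (batch_grad 1 g B x))\<^sup>2) = (\<Sum>i<N. (norm (g i x))\<^sup>2)"
    unfolding bat by (subst sum.reindex) (auto simp: inj_on_def batch_grad_def)
  moreover have "card (batches N 1) = N" by (simp add: batches_card)
  ultimately have "(\<Sum>i<N. (norm (g i x))\<^sup>2) / real N \<le> \<rho>1 * (norm (full_grad N g x))\<^sup>2"
    using assms unfolding strong_growth_def by metis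
  then show ?thesis
    by (cases "N = 0") (auto simp: field_simps)
qed

definition rhob :: "nat \<Rightarrow> nat \<Rightarrow> real \<Rightarrow> real" where
  "rhob N K \<rho>1 = (\<rho>1 * (real N - real K) + (real K - 1) * real N) / (real K * (real N - 1))"

lemma alg: fixes n k C G r :: real assumes "n - 1 > 0" "k > 0" "n > 0"
  shows "(1/k)^2 * (k*(k-1)*C/(n*(n-1)) * (n^2*G) + k*C*(n-k)/(n*(n-1)) * (n*r*G)) = C * ((r*(n-k) + (k-1)*n)/(k*(n-1))) * G"
proof -
  have "k*(k-1)*C/(n*(n-1)) * (n^2*G) = k*C*G*((k-1)*n)/(n-1)" using assms by (simp add: power2_eq_square)
  moreover have "k*C*(n-k)/(n*(n-1)) * (n*r*G) = k*C*G*(r*(n-k))/(n-1)" using assms by simp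
  ultimately have "(k*(k-1)*C/(n*(n-1)) * (n^2*G) + k*C*(n-k)/(n*(n-1)) * (n*r*G)) = k*C*G*((r*(n-k) + (k-1)*n))/(n-1)"
    by (simp add: add_divide_distrib distrib_left)
  then show ?thesis using assms by (simp add: power2_eq_square)
qed

lemma sum_bg2:
  assumes "1 \<le> K" "K \<le> N" "2 \<le> N" "strong_growth N g 1 \<rho>1"
  shows "(\<Sum>B\<in>batches N K. (norm (batch_grad K g B x))\<^sup>2) \<le> real (card (batches N K)) * rhob N K \<rho>1 * (norm (full_grad N g x))\<^sup>2"
proof -
  define C where "C = real (N choose K)"
  define G where "G = (norm (full_grad N g x))\<^sup>2"
  define S where "S = (\<Sum>i<N. (norm (g i x))\<^sup>2)"
  have Cpos: "C > 0" unfolding C_def using assms by simp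
  have "(\<Sum>B\<in>batches N K. (norm (batch_grad K g B x))\<^sup>2)
     = (\<Sum>B\<in>batches N K. (1 / real K)\<^sup>2 * (\<Sum>i\<in>B. \<Sum>j\<in>B. inner (g i x) (g j x)))"
    unfolding batch_grad_def power2_norm_eq_inner
  proof (intro sum.cong refl)
    fix B :: "nat set"
    have e: "inner (\<Sum>i\<in>B. g i x) (\<Sum>j\<in>B. g j x) = (\<Sum>i\<in>B. \<Sum>j\<in>B. inner (g i x) (g j x))"
      by (simp only: inner_sum_left inner_sum_right, rule sum.swap)
    show "inner ((1 / real K) *\<^sub>R (\<Sum>i\<in>B. g i x)) ((1 / real K) *\<^sub>R (\<Sum>i\<in>B. g i x)) =
         (1 / real K)\<^sup>2 * (\<Sum>i\<in>B. \<Sum>j\<in>B. inner (g i x) (g j x))"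
      by (simp only: inner_scaleR_left inner_scaleR_right e power2_eq_square mult.assoc)
  qed
  also have "\<dots> = (1 / real K)\<^sup>2 * (c2 N K * (\<Sum>i<N. \<Sum>j<N. inner (g i x) (g j x)) + (c1 N K - c2 N K) * (\<Sum>i<N. inner (g i x) (g i x)))"
    by (simp add: sum_distrib_left[symmetric] pair_sum[OF assms(1)])
  also have "(\<Sum>i<N. \<Sum>j<N. inner (g i x) (g j x)) = (real N)\<^sup>2 * G"
  proof -
    have "(\<Sum>i<N. \<Sum>j<N. inner (g i x) (g j x)) = inner (\<Sum>i<N. g i x) (\<Sum>j<N. g j x)"
      by (simp only: inner_sum_left inner_sum_right, rule sum.swap)
    also have "(\<Sum>i<N. g i x) = real N *\<^sub>R full_grad N g x"
      unfolding full_grad_def using assms by simp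
    finally show ?thesis unfolding G_def power2_norm_eq_inner by (simp add: power2_eq_square)
  qed
  also have "(\<Sum>i<N. inner (g i x) (g i x)) = S" unfolding S_def by (simp add: power2_norm_eq_inner)
  finally have eq: "(\<Sum>B\<in>batches N K. (norm (batch_grad K g B x))\<^sup>2) = (1 / real K)\<^sup>2 * (c2 N K * ((real N)\<^sup>2 * G) + (c1 N K - c2 N K) * S)" .
  have S: "S \<le> real N * \<rho>1 * G" unfolding S_def G_def by (rule sgc1[OF assms(4)])
  have c1: "c1 N K = real K * C / real N" unfolding C_def using c1_eq assms by simp
  have c2: "c2 N K = real K * (real K - 1) * C / (real N * (real N - 1))" unfolding C_def using c2_eq assms by simp
  have Nr: "real N \<ge> 2" "real K \<ge> 1" "real K \<le> real N" using assms by auto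
  have diff: "c1 N K - c2 N K = real K * C * (real N - real K) / (real N * (real N - 1))"
    unfolding c1 c2 using Nr by (simp add: field_simps)
  have dnn: "c1 N K - c2 N K \<ge> 0" unfolding diff using Nr Cpos by (intro divide_nonneg_pos mult_nonneg_nonneg) auto
  have "(1 / real K)\<^sup>2 * (c2 N K * ((real N)\<^sup>2 * G) + (c1 N K - c2 N K) * S)
     \<le> (1 / real K)\<^sup>2 * (c2 N K * ((real N)\<^sup>2 * G) + (c1 N K - c2 N K) * (real N * \<rho>1 * G))"
    using S dnn by (intro mult_left_mono add_left_mono mult_left_mono) auto
  also have "\<dots> = C * rhob N K \<rho>1 * G"
  proof -
    have p: "real N - 1 > 0" "real K > 0" "real N > 0" using Nr by auto
    show ?thesis unfolding rhob_def diff unfolding c2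
      using alg[OF p, of C G \<rho>1] by (simp add: mult.assoc)
  qed
  finally show ?thesis unfolding eq C_def G_def batches_card .
qed




lemma one_step:
  fixes F :: "'a::real_inner \<Rightarrow> real" and Gr :: "'b \<Rightarrow> 'a \<Rightarrow> 'a"
  assumes der: "\<forall>x. (F has_derivative (\<lambda>h. inner (G x) h)) (at x)"
    and lip: "\<forall>x y. norm (G x - G y) \<le> L * norm (x - y)"
    and cvx: "convex_on UNIV F"
    and minim: "\<forall>x. F xs \<le> F x"
    and Lpos: "L > 0"
    and avg1: "(\<Sum>B\<in>P. Gr B y) = C *\<^sub>R G y"
    and avg2: "(\<Sum>B\<in>P. (norm (Gr B y))\<^sup>2) \<le> C * \<rho> * (norm (G y))\<^sup>2"
    and Cpos: "C > 0" and Cdef: "C = real (card P)"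
    and y: "y = \<alpha> *\<^sub>R x + (1 - \<alpha>) *\<^sub>R z"
    and a'nn: "a' \<ge> 0" and eta: "\<eta> \<ge> 0" and al: "\<alpha> < 1" and al0: "0 \<le> \<alpha>"
    and gcoef: "(a' * L * s\<^sup>2 + \<eta>\<^sup>2) * \<rho> / 2 \<le> a' * s"
    and c1: "a' \<le> \<eta> / (1 - \<alpha>)" and c2: "\<eta> * \<alpha> / (1 - \<alpha>) \<le> a"
  shows "(\<Sum>B\<in>P. a' * (F (y - s *\<^sub>R Gr B y) - F xs) + 1/2 * (norm (z - \<eta> *\<^sub>R Gr B y - xs))\<^sup>2)
     \<le> C * (a * (F x - F xs) + 1/2 * (norm (z - xs))\<^sup>2)"
proof -
  have fin: "finite P" using Cpos Cdef card.infinite by fastforce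
  define g where "g = G y"
  define w where "w = z - xs"
  define c where "c = (a' * L * s\<^sup>2 + \<eta>\<^sup>2) / 2"
  have cnn: "c \<ge> 0" unfolding c_def using a'nn Lpos by simp
  define A where "A = a' * (F y - F xs) + 1/2 * (norm w)\<^sup>2"
  have pt: "a' * (F (y - s *\<^sub>R Gr B y) - F xs) + 1/2 * (norm (z - \<eta> *\<^sub>R Gr B y - xs))\<^sup>2
      \<le> A - a' * s * inner g (Gr B y) + c * (norm (Gr B y))\<^sup>2 - \<eta> * inner (Gr B y) w" for B
  proof -
    define v where "v = Gr B y"
    have d: "F (y - s *\<^sub>R v) \<le> F y + inner g ((y - s *\<^sub>R v) - y) + L / 2 * (norm ((y - s *\<^sub>R v) - y))\<^sup>2"
      unfolding g_def by (rule descent[OF der lip])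
    have d2: "F (y - s *\<^sub>R v) \<le> F y - s * inner g v + L / 2 * s\<^sup>2 * (norm v)\<^sup>2"
      using d by (simp add: power_mult_distrib)
    have n: "(norm (z - \<eta> *\<^sub>R v - xs))\<^sup>2 = (norm w)\<^sup>2 - 2 * \<eta> * inner v w + \<eta>\<^sup>2 * (norm v)\<^sup>2"
    proof -
      have "z - \<eta> *\<^sub>R v - xs = w - \<eta> *\<^sub>R v" unfolding w_def by simp
      then show ?thesis unfolding power2_norm_eq_inner
        by (simp add: inner_diff_left inner_diff_right inner_commute power2_eq_square algebra_simps)
    qed
    have "a' * (F (y - s *\<^sub>R v) - F xs) \<le> a' * (F y - s * inner g v + L / 2 * s\<^sup>2 * (norm v)\<^sup>2 - F xs)"
      using d2 a'nn by (intro mult_left_mono) auto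
    then show ?thesis unfolding v_def[symmetric] n A_def c_def
      by (simp add: algebra_simps add_divide_distrib)
  qed
  have "(\<Sum>B\<in>P. a' * (F (y - s *\<^sub>R Gr B y) - F xs) + 1/2 * (norm (z - \<eta> *\<^sub>R Gr B y - xs))\<^sup>2)
      \<le> (\<Sum>B\<in>P. A - a' * s * inner g (Gr B y) + c * (norm (Gr B y))\<^sup>2 - \<eta> * inner (Gr B y) w)"
    by (rule sum_mono[OF pt])
  also have "\<dots> = C * A - a' * s * inner g (\<Sum>B\<in>P. Gr B y) + c * (\<Sum>B\<in>P. (norm (Gr B y))\<^sup>2) - \<eta> * inner (\<Sum>B\<in>P. Gr B y) w"
    unfolding Cdef by (simp add: sum.distrib sum_subtractf inner_sum_left inner_sum_right sum_distrib_left)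
  also have "\<dots> \<le> C * A - a' * s * inner g (C *\<^sub>R g) + c * (C * \<rho> * (norm g)\<^sup>2) - \<eta> * inner (C *\<^sub>R g) w"
    unfolding avg1 g_def[symmetric] using avg2 cnn unfolding g_def by (simp add: mult_left_mono)
  also have "\<dots> = C * (A - a' * s * (norm g)\<^sup>2 + c * \<rho> * (norm g)\<^sup>2 - \<eta> * inner g w)"
    by (simp add: power2_norm_eq_inner algebra_simps)
  also have "\<dots> \<le> C * (a * (F x - F xs) + 1/2 * (norm (z - xs))\<^sup>2)"
  proof (rule mult_left_mono)
    show "0 \<le> C" using Cpos by simp
    define q where "q = \<alpha> / (1 - \<alpha>)"
    have wq: "w = (y - xs) + q *\<^sub>R (y - x)"
    proof -
      have qa: "(1 - \<alpha>) * q = \<alpha>" unfolding q_def using al by simp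
      have e: "(1 - \<alpha>) *\<^sub>R (y - xs) + \<alpha> *\<^sub>R (y - x) = (1 - \<alpha>) *\<^sub>R w"
        unfolding y w_def by (simp add: algebra_simps)
      have "(1 - \<alpha>) *\<^sub>R ((y - xs) + q *\<^sub>R (y - x)) = (1 - \<alpha>) *\<^sub>R (y - xs) + ((1 - \<alpha>) * q) *\<^sub>R (y - x)"
        by (simp only: scaleR_add_right scaleR_scaleR)
      then have "(1 - \<alpha>) *\<^sub>R w = (1 - \<alpha>) *\<^sub>R ((y - xs) + q *\<^sub>R (y - x))"
        using e qa by (simp del: scaleR_cancel_left)
      then show ?thesis using al by simp
    qed
    have t1: "inner g (y - xs) \<ge> F y - F xs"
      using convex_tangent[OF der cvx, of y xs] unfolding g_def by (simp add: inner_diff_right)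
    have t2: "inner g (y - x) \<ge> F y - F x"
      using convex_tangent[OF der cvx, of y x] unfolding g_def by (simp add: inner_diff_right)
    have qnn: "q \<ge> 0 \<or> True" by simp
    have ig: "inner g w = inner g (y - xs) + q * inner g (y - x)" unfolding wq by (simp add: inner_add_right)
    have gc: "- a' * s * (norm g)\<^sup>2 + c * \<rho> * (norm g)\<^sup>2 \<le> 0"
    proof -
      have "c * \<rho> \<le> a' * s" using gcoef unfolding c_def by simp
      then have "(c * \<rho> - a' * s) * (norm g)\<^sup>2 \<le> 0" by (simp add: mult_nonpos_nonneg)
      then show ?thesis by (simp add: algebra_simps)
    qed
    have fy: "F y - F xs \<ge> 0" "F x - F xs \<ge> 0" using minim by auto
    show "A - a' * s * (norm g)\<^sup>2 + c * \<rho> * (norm g)\<^sup>2 - \<eta> * inner g w \<le> a * (F x - F xs) + 1/2 * (norm (z - xs))\<^sup>2"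
    proof -
      have q0: "q \<ge> 0" unfolding q_def using al al0 by simp
      have "\<eta> * inner g w \<ge> \<eta> * ((F y - F xs) + q * (F y - F x))"
        unfolding ig using t1 t2 q0 eta
        by (intro mult_left_mono add_mono mult_left_mono) auto
      moreover have "\<eta> * ((F y - F xs) + q * (F y - F x)) = \<eta> / (1 - \<alpha>) * (F y - F xs) - \<eta> * q * (F x - F xs)"
      proof -
        have "1 + q = 1 / (1 - \<alpha>)" unfolding q_def using al by (simp add: field_simps)
        then have "\<eta> / (1 - \<alpha>) = \<eta> * (1 + q)" by simp
        then show ?thesis by (simp add: algebra_simps)
      qed
      moreover have "\<eta> * q \<le> a" using c2 unfolding q_def by simp
      moreover have "a' * (F y - F xs) \<le> \<eta> / (1 - \<alpha>) * (F y - F xs)" using c1 fy by (intro mult_right_mono) auto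
      moreover have "\<eta> * q * (F x - F xs) \<le> a * (F x - F xs)" using \<open>\<eta> * q \<le> a\<close> fy by (intro mult_right_mono) auto
      ultimately show ?thesis using gc unfolding A_def w_def by linarith
    qed
  qed
  finally show ?thesis .
qed




lemma sum_PiE_step:
  assumes "finite S"
  shows "(\<Sum>Bs\<in>PiE {..<Suc n} (\<lambda>_. S). h Bs) = (\<Sum>Bs\<in>PiE {..<n} (\<lambda>_. S). \<Sum>B\<in>S. h (Bs(n := B)))"
proof -
  have eq: "PiE {..<Suc n} (\<lambda>_. S) = (\<lambda>(y, g). g(n := y)) ` (S \<times> PiE {..<n} (\<lambda>_. S))"
    unfolding lessThan_Suc by (rule PiE_insert_eq)
  have inj: "inj_on (\<lambda>(y, g). g(n := y)) (S \<times> PiE {..<n} (\<lambda>_. S))"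
  proof (rule inj_onI)
    fix p p' assume p: "p \<in> S \<times> PiE {..<n} (\<lambda>_. S)" and p': "p' \<in> S \<times> PiE {..<n} (\<lambda>_. S)"
      and e0: "(\<lambda>(y, g). g(n := y)) p = (\<lambda>(y, g). g(n := y)) p'"
    obtain y g where pe: "p = (y, g)" by (cases p)
    obtain y' g' where pe': "p' = (y', g')" by (cases p')
    have g: "g \<in> PiE {..<n} (\<lambda>_. S)" using p pe by (simp add: mem_Times_iff)
    have g': "g' \<in> PiE {..<n} (\<lambda>_. S)" using p' pe' by (simp add: mem_Times_iff)
    have e: "g(n := y) = g'(n := y')" using e0 pe pe' by simp
    have "y = y'" using fun_cong[OF e, of n] by simp
    moreover have "g = g'"
    proof
      fix m show "g m = g' m"
      proof (cases "m = n")
        case True then show ?thesis using PiE_arb[OF g, of n] PiE_arb[OF g', of n] by simp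
      next
        case False then show ?thesis using fun_cong[OF e, of m] by simp
      qed
    qed
    ultimately show "p = p'" using pe pe' by simp
  qed
  have "(\<Sum>Bs\<in>PiE {..<Suc n} (\<lambda>_. S). h Bs) = (\<Sum>p\<in>S \<times> PiE {..<n} (\<lambda>_. S). h ((\<lambda>(y, g). g(n := y)) p))"
    unfolding eq by (rule sum.reindex[OF inj, unfolded comp_def])
  also have "\<dots> = (\<Sum>B\<in>S. \<Sum>Bs\<in>PiE {..<n} (\<lambda>_. S). h (Bs(n := B)))"
    by (subst sum.cartesian_product) (simp add: case_prod_unfold)
  also have "\<dots> = (\<Sum>Bs\<in>PiE {..<n} (\<lambda>_. S). \<Sum>B\<in>S. h (Bs(n := B)))"
    by (rule sum.swap)
  finally show ?thesis .
qed

lemma snag_local: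
  "(\<forall>m<n. Bs m = Bs' m) \<Longrightarrow> snag K g \<alpha> \<beta> s \<eta> x0 Bs n = snag K g \<alpha> \<beta> s \<eta> x0 Bs' n"
proof (induction n)
  case 0
  then show ?case by simp
next
  case (Suc n)
  then have IH: "snag K g \<alpha> \<beta> s \<eta> x0 Bs n = snag K g \<alpha> \<beta> s \<eta> x0 Bs' n" by simp
  have e: "Bs n = Bs' n" using Suc.prems by simp
  show ?case by (simp only: snag.simps IH e)
qed

lemma card_PS: "card (PiE {..<n} (\<lambda>_. S)) = card S ^ n"
  by (simp add: card_PiE prod_constant)



lemma params:
  fixes t L \<rho> :: real
  assumes t: "t \<ge> 0" and L: "L > 0" and r: "\<rho> > 0"
  defines "\<alpha> \<equiv> (t ^ 2 / (t + 1)) / (2 + t ^ 2 / (t + 1))"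
    and "\<eta> \<equiv> 1 / (L * \<rho>\<^sup>2) * ((t + 1) / 2)"
    and "s \<equiv> 1 / (L * \<rho>)"
    and "a' \<equiv> (t + 1)\<^sup>2 / (4 * L * \<rho>\<^sup>2)"
    and "a \<equiv> t\<^sup>2 / (4 * L * \<rho>\<^sup>2)"
  shows "a' \<ge> 0" "\<eta> \<ge> 0" "\<alpha> < 1" "0 \<le> \<alpha>"
    "(a' * L * s\<^sup>2 + \<eta>\<^sup>2) * \<rho> / 2 \<le> a' * s"
    "a' \<le> \<eta> / (1 - \<alpha>)" "\<eta> * \<alpha> / (1 - \<alpha>) \<le> a"
proof -
  define u where "u = t ^ 2 / (t + 1)"
  have u0: "u \<ge> 0" unfolding u_def using t by simp
  have ut: "u * (t + 1) = t ^ 2" unfolding u_def using t by simp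
  have al: "\<alpha> = u / (2 + u)" unfolding \<alpha>_def u_def by simp
  have oma: "1 - \<alpha> = 2 / (2 + u)" unfolding al using u0 by (simp add: field_simps)
  show "a' \<ge> 0" unfolding a'_def using L r by simp
  show "\<eta> \<ge> 0" unfolding \<eta>_def using L r t by simp
  show "\<alpha> < 1" unfolding al using u0 by simp
  show "0 \<le> \<alpha>" unfolding al using u0 by simp
  show "(a' * L * s\<^sup>2 + \<eta>\<^sup>2) * \<rho> / 2 \<le> a' * s"
    unfolding a'_def s_def \<eta>_def using L r by (simp add: field_simps power2_eq_square)
  have e1: "\<eta> / (1 - \<alpha>) = (t + 1) * (2 + u) / (4 * L * \<rho>\<^sup>2)"
    unfolding oma \<eta>_def using L r u0 by (simp add: field_simps)
  have "(t + 1)\<^sup>2 \<le> (t + 1) * (2 + u)"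
  proof -
    have "(t + 1) * (2 + u) = 2 * t + 2 + t ^ 2" using ut by (simp add: algebra_simps)
    then show ?thesis by (simp add: power2_eq_square algebra_simps)
  qed
  then show "a' \<le> \<eta> / (1 - \<alpha>)" unfolding e1 a'_def using L r
    by (intro divide_right_mono) auto
  have e2: "\<eta> * \<alpha> / (1 - \<alpha>) = (t + 1) * u / (4 * L * \<rho>\<^sup>2)"
  proof -
    have q: "\<alpha> / (1 - \<alpha>) = u / 2" unfolding oma al using u0 by (simp add: field_simps)
    have "\<eta> * \<alpha> / (1 - \<alpha>) = \<eta> * (\<alpha> / (1 - \<alpha>))" by simp
    also have "\<dots> = (t + 1) * u / (4 * L * \<rho>\<^sup>2)" unfolding q \<eta>_def using L r by (simp add: field_simps)
    finally show ?thesis .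
  qed
  show "\<eta> * \<alpha> / (1 - \<alpha>) \<le> a" unfolding e2 a_def using ut by (simp add: mult.commute)
qed



lemma Kr_alg: fixes D r k A n B :: real assumes "D > 0" "r > 0" "k > 0"
  shows "(A / D + n / r * (B / D)) * r = k * ((r * A + B * n) / (k * D))"
  using assms by (simp add: field_simps)

theorem theorem5:
  fixes N K :: nat and f :: "nat \<Rightarrow> 'a::euclidean_space \<Rightarrow> real" and g :: "nat \<Rightarrow> 'a \<Rightarrow> 'a"
    and L \<rho>1 \<epsilon> :: real and xstar x0 :: 'a and n :: nat
  assumes N2: "N \<ge> 2"
    and grad: "\<forall>i<N. \<forall>x. (f i has_derivative (\<lambda>h. inner (g i x) h)) (at x)"
    and cont: "\<forall>i<N. continuous_on UNIV (g i)"
    and cvx: "convex_on UNIV (full_obj N f)"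
    and Lpos: "L > 0"
    and smooth: "\<forall>x y. norm (full_grad N g x - full_grad N g y) \<le> L * norm (x - y)"
    and minim: "\<forall>x. full_obj N f xstar \<le> full_obj N f x"
    and rho1: "\<rho>1 \<ge> 1"
    and sgc: "strong_growth N g 1 \<rho>1"
    and K: "1 \<le> K" "K \<le> N"
    and eps: "\<epsilon> > 0"
    and budget: "real n * real K \<ge>
        ((real N - real K) / (real N - 1) + real N / \<rho>1 * ((real K - 1) / (real N - 1)))
          * \<rho>1 * sqrt (2 * L / \<epsilon>) * norm (x0 - xstar)"
  shows "let \<rho>K = (\<rho>1 * (real N - real K) + (real K - 1) * real N) / (real K * (real N - 1));
             s = 1 / (L * \<rho>K);
             \<eta> = (\<lambda>m::nat. 1 / (L * \<rho>K\<^sup>2) * ((real m + 1) / 2));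
             \<alpha> = (\<lambda>m::nat. (real m ^ 2 / (real m + 1)) / (2 + real m ^ 2 / (real m + 1)))
         in snag_expect N K g (full_obj N f) \<alpha> 1 s \<eta> x0 n - full_obj N f xstar \<le> \<epsilon>"
proof -
  define \<rho> where "\<rho> = (\<rho>1 * (real N - real K) + (real K - 1) * real N) / (real K * (real N - 1))"
  have \<rho>rhob: "\<rho> = rhob N K \<rho>1" unfolding \<rho>_def rhob_def ..
  have Nr: "real N \<ge> 2" "real K \<ge> 1" "real K \<le> real N" using N2 K by auto
  have \<rho>ge: "\<rho> \<ge> 1"
  proof -
    have "\<rho>1 * (real N - real K) \<ge> 1 * (real N - real K)" using rho1 Nr by (intro mult_right_mono) auto
    then have "\<rho>1 * (real N - real K) + (real K - 1) * real N \<ge> real K * (real N - 1)"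
      by (simp add: algebra_simps)
    moreover have "real K * (real N - 1) > 0" using Nr by simp
    ultimately show ?thesis unfolding \<rho>_def by simp
  qed
  have \<rho>pos: "\<rho> > 0" using \<rho>ge by simp
  define s where "s = 1 / (L * \<rho>)"
  define \<eta> where "\<eta> = (\<lambda>m::nat. 1 / (L * \<rho>\<^sup>2) * ((real m + 1) / 2))"
  define \<alpha> where "\<alpha> = (\<lambda>m::nat. (real m ^ 2 / (real m + 1)) / (2 + real m ^ 2 / (real m + 1)))"
  define F where "F = full_obj N f"
  define G where "G = full_grad N g"
  define P where "P = batches N K"
  define C where "C = real (card P)"
  have finP: "finite P" unfolding P_def by (rule batches_finite)
  have Cpos: "C > 0" unfolding C_def P_def batches_card using K by simp
  have der: "\<forall>x. (F has_derivative (\<lambda>h. inner (G x) h)) (at x)"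
    unfolding F_def G_def using full_obj_deriv[OF grad] by blast
  have lip: "\<forall>x y. norm (G x - G y) \<le> L * norm (x - y)" unfolding G_def by (rule smooth)
  have cvxF: "convex_on UNIV F" unfolding F_def by (rule cvx)
  have minF: "\<forall>x. F xstar \<le> F x" unfolding F_def by (rule minim)
  have avg1: "(\<Sum>B\<in>P. batch_grad K g B y) = C *\<^sub>R G y" for y
    unfolding P_def C_def G_def using sum_bg[OF K] by blast
  have avg2: "(\<Sum>B\<in>P. (norm (batch_grad K g B y))\<^sup>2) \<le> C * \<rho> * (norm (G y))\<^sup>2" for y
    unfolding P_def C_def G_def \<rho>rhob using sum_bg2[OF K N2 sgc] by blast
  define a where "a m = (real m)\<^sup>2 / (4 * L * \<rho>\<^sup>2)" for m :: nat
  define V where "V m xz = a m * (F (fst xz) - F xstar) + 1/2 * (norm (snd xz - xstar))\<^sup>2" for m :: nat and xz :: "'a \<times> 'a"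
  define st where "st Bs m = snag K g \<alpha> 1 s \<eta> x0 Bs m" for Bs m
  have main: "(\<Sum>Bs\<in>PiE {..<m} (\<lambda>_. P). V m (st Bs m)) \<le> C ^ m * (1/2 * (norm (x0 - xstar))\<^sup>2)" for m
  proof (induction m)
    case 0
    have "PiE {..<0::nat} (\<lambda>_. P) = {\<lambda>_. undefined}" by simp
    then show ?case unfolding V_def st_def a_def by simp
  next
    case (Suc m)
    have step: "(\<Sum>B\<in>P. V (Suc m) (st (Bs(m := B)) (Suc m))) \<le> C * V m (st Bs m)" for Bs
    proof -
      obtain x z where xz: "st Bs m = (x, z)" by (cases "st Bs m")
      define y where "y = \<alpha> m *\<^sub>R x + (1 - \<alpha> m) *\<^sub>R z"
      have sB: "st (Bs(m := B)) (Suc m) = (y - s *\<^sub>R batch_grad K g B y, z - \<eta> m *\<^sub>R batch_grad K g B y)" for B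
      proof -
        have "st (Bs(m := B)) m = st Bs m" unfolding st_def by (rule snag_local) simp
        then have "snag K g \<alpha> 1 s \<eta> x0 (Bs(m := B)) m = (x, z)" using xz unfolding st_def by simp
        then show ?thesis unfolding st_def y_def by (simp add: Let_def)
      qed
      have pr: "a (Suc m) \<ge> 0" "\<eta> m \<ge> 0" "\<alpha> m < 1" "0 \<le> \<alpha> m"
        "(a (Suc m) * L * s\<^sup>2 + (\<eta> m)\<^sup>2) * \<rho> / 2 \<le> a (Suc m) * s"
        "a (Suc m) \<le> \<eta> m / (1 - \<alpha> m)" "\<eta> m * \<alpha> m / (1 - \<alpha> m) \<le> a m"
        using params[of "real m" L \<rho>, OF _ Lpos \<rho>pos] unfolding a_def \<eta>_def \<alpha>_def s_def
        by (simp_all add: add.commute)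
      have "(\<Sum>B\<in>P. a (Suc m) * (F (y - s *\<^sub>R batch_grad K g B y) - F xstar) + 1/2 * (norm (z - \<eta> m *\<^sub>R batch_grad K g B y - xstar))\<^sup>2)
          \<le> C * (a m * (F x - F xstar) + 1/2 * (norm (z - xstar))\<^sup>2)"
        by (rule one_step[where Gr="\<lambda>B y. batch_grad K g B y" and y=y and \<rho>=\<rho>, OF der lip cvxF minF Lpos avg1 avg2 Cpos C_def y_def pr])
      then show ?thesis unfolding V_def sB xz by simp
    qed
    have "(\<Sum>Bs\<in>PiE {..<Suc m} (\<lambda>_. P). V (Suc m) (st Bs (Suc m)))
        = (\<Sum>Bs\<in>PiE {..<m} (\<lambda>_. P). \<Sum>B\<in>P. V (Suc m) (st (Bs(m := B)) (Suc m)))"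
      by (rule sum_PiE_step[OF finP])
    also have "\<dots> \<le> (\<Sum>Bs\<in>PiE {..<m} (\<lambda>_. P). C * V m (st Bs m))"
      by (rule sum_mono[OF step])
    also have "\<dots> = C * (\<Sum>Bs\<in>PiE {..<m} (\<lambda>_. P). V m (st Bs m))"
      by (simp add: sum_distrib_left)
    also have "\<dots> \<le> C * (C ^ m * (1/2 * (norm (x0 - xstar))\<^sup>2))"
      using Suc.IH Cpos by (intro mult_left_mono) auto
    finally show ?case by simp
  qed
  have cardPS: "real (card (PiE {..<n} (\<lambda>_. P))) = C ^ n"
    unfolding card_PS C_def by simp
  have Cn: "C ^ n > 0" using Cpos by simp
  have goal: "snag_expect N K g F \<alpha> 1 s \<eta> x0 n - F xstar \<le> \<epsilon>"
  proof (cases "n = 0")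
    case True
    have Kr: "((real N - real K) / (real N - 1) + real N / \<rho>1 * ((real K - 1) / (real N - 1))) * \<rho>1 = real K * \<rho>"
      unfolding \<rho>_def using Kr_alg[of "real N - 1" \<rho>1 "real K" "real N - real K" "real N" "real K - 1"] Nr rho1 by simp
    have "real K * \<rho> * sqrt (2 * L / \<epsilon>) * norm (x0 - xstar) \<le> 0"
      using budget True unfolding Kr by simp
    moreover have "real K * \<rho> * sqrt (2 * L / \<epsilon>) > 0" using Nr \<rho>pos Lpos eps by simp
    ultimately have "norm (x0 - xstar) \<le> 0"
      using mult_le_cancel_left_pos[of "real K * \<rho> * sqrt (2 * L / \<epsilon>)" "norm (x0 - xstar)" 0] by simp
    then have "x0 = xstar" by simp
    then show ?thesis unfolding snag_expect_def P_def[symmetric] using True eps by simp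
  next
    case False
    have an: "a n > 0" unfolding a_def using False Lpos \<rho>pos by simp
    define d where "d = norm (x0 - xstar)"
    have "(\<Sum>Bs\<in>PiE {..<n} (\<lambda>_. P). a n * (F (fst (st Bs n)) - F xstar)) \<le> (\<Sum>Bs\<in>PiE {..<n} (\<lambda>_. P). V n (st Bs n))"
      unfolding V_def by (intro sum_mono) simp
    also have "\<dots> \<le> C ^ n * (1/2 * d\<^sup>2)" using main[of n] unfolding d_def .
    finally have "a n * (\<Sum>Bs\<in>PiE {..<n} (\<lambda>_. P). F (fst (st Bs n)) - F xstar) \<le> C ^ n * (1/2 * d\<^sup>2)"
      by (simp add: sum_distrib_left)
    then have S: "(\<Sum>Bs\<in>PiE {..<n} (\<lambda>_. P). F (fst (st Bs n)) - F xstar) / C ^ n \<le> (1/2 * d\<^sup>2) / a n"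
      using an Cn by (simp add: field_simps)
    have "snag_expect N K g F \<alpha> 1 s \<eta> x0 n - F xstar = (\<Sum>Bs\<in>PiE {..<n} (\<lambda>_. P). F (fst (st Bs n)) - F xstar) / C ^ n"
    proof -
      have "snag_expect N K g F \<alpha> 1 s \<eta> x0 n = (\<Sum>Bs\<in>PiE {..<n} (\<lambda>_. P). F (fst (st Bs n))) / C ^ n"
        unfolding snag_expect_def P_def[symmetric] st_def[symmetric] cardPS ..
      moreover have "(\<Sum>Bs\<in>PiE {..<n} (\<lambda>_. P). F (fst (st Bs n)) - F xstar) = (\<Sum>Bs\<in>PiE {..<n} (\<lambda>_. P). F (fst (st Bs n))) - C ^ n * F xstar"
        by (simp add: sum_subtractf cardPS[symmetric])
      moreover have "\<And>T U c Fs :: real. c > 0 \<Longrightarrow> U = T - c * Fs \<Longrightarrow> T / c - Fs = U / c"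
        by (simp add: diff_divide_distrib)
      ultimately show ?thesis using Cn by metis
    qed
    also have "\<dots> \<le> (1/2 * d\<^sup>2) / a n" by (rule S)
    also have "\<dots> \<le> \<epsilon>"
    proof -
      have Kr: "((real N - real K) / (real N - 1) + real N / \<rho>1 * ((real K - 1) / (real N - 1))) * \<rho>1 = real K * \<rho>"
        unfolding \<rho>_def using Kr_alg[of "real N - 1" \<rho>1 "real K" "real N - real K" "real N" "real K - 1"] Nr rho1 by simp
      have "real n * real K \<ge> real K * \<rho> * sqrt (2 * L / \<epsilon>) * d"
        using budget unfolding Kr d_def by simp
      then have nb: "real n \<ge> \<rho> * sqrt (2 * L / \<epsilon>) * d" using Nr by (simp add: mult.commute mult.left_commute)
      have nn: "\<rho> * sqrt (2 * L / \<epsilon>) * d \<ge> 0" unfolding d_def using \<rho>pos Lpos eps by (intro mult_nonneg_nonneg) auto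
      have "(\<rho> * sqrt (2 * L / \<epsilon>) * d)\<^sup>2 \<le> (real n)\<^sup>2" using nb nn by (intro power_mono) auto
      moreover have "(\<rho> * sqrt (2 * L / \<epsilon>) * d)\<^sup>2 = \<rho>\<^sup>2 * (2 * L / \<epsilon>) * d\<^sup>2"
        using Lpos eps by (simp add: power_mult_distrib)
      ultimately have h: "\<rho>\<^sup>2 * (2 * L / \<epsilon>) * d\<^sup>2 \<le> (real n)\<^sup>2" by simp
      have "(1/2 * d\<^sup>2) / a n = 2 * L * \<rho>\<^sup>2 * d\<^sup>2 / (real n)\<^sup>2"
        unfolding a_def using False Lpos \<rho>pos by (simp add: field_simps)
      also have "\<dots> \<le> \<epsilon>"
        using h False eps by (simp add: field_simps)
      finally show ?thesis .
    qed
    finally show ?thesis .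
  qed
  show ?thesis unfolding Let_def \<rho>_def[symmetric] s_def[symmetric] \<eta>_def[symmetric] \<alpha>_def[symmetric]
    using goal unfolding F_def .
qed


end
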